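(* For any space $X$, $\mathcal{K}(X) =_T \mathcal{K}(\mathcal{K}(X))$.
   Context: All spaces are Tychonoff. $\mathcal{K}(X)$ is the set of compact subsets of $X$ ordered by inclusion and equipped with the Vietoris topology; $\mathcal{K}(\mathcal{K}(X))$ is the set of compact subsets of the space $\mathcal{K}(X)$, ordered by inclusion. For directed sets $P,Q$, $P \ge_T Q$ means there is a map $\phi:P\to Q$ such that $\phi(C)$ is cofinal in $Q$ for every cofinal $C\subseteq P$; $P =_T Q$ means $P\ge_T Q$ and $Q \ge_T P$. *)

theory Defs
  imports "HOL-Analysis.Analysis"
begin

definition tychonoff_space :: "'a topology \<Rightarrow> bool" where
  "tychonoff_space X \<longleftrightarrow> completely_regular_space X \<and> t1_space X"

definition compacts :: "'a topology \<Rightarrow> 'a set set" where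
  "compacts X = {C. compactin X C}"

definition vietoris :: "'a topology \<Rightarrow> 'a set topology" where
  "vietoris X = topology_generated_by
     ({{C \<in> compacts X. C \<subseteq> U} | U. openin X U} \<union>
      {{C \<in> compacts X. C \<inter> U \<noteq> {}} | U. openin X U})"

definition cofinal_in :: "('a \<Rightarrow> 'a \<Rightarrow> bool) \<Rightarrow> 'a set \<Rightarrow> 'a set \<Rightarrow> bool" where
  "cofinal_in le C P \<longleftrightarrow> C \<subseteq> P \<and> (\<forall>p\<in>P. \<exists>c\<in>C. le p c)"

definition tukey_ge :: "'a set \<Rightarrow> ('a \<Rightarrow> 'a \<Rightarrow> bool) \<Rightarrow> 'b set \<Rightarrow> ('b \<Rightarrow> 'b \<Rightarrow> bool) \<Rightarrow> bool" where
  "tukey_ge P leP Q leQ \<longleftrightarrow>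
     (\<exists>\<phi>. \<phi> ` P \<subseteq> Q \<and> (\<forall>C. cofinal_in leP C P \<longrightarrow> cofinal_in leQ (\<phi> ` C) Q))"

definition tukey_eq :: "'a set \<Rightarrow> ('a \<Rightarrow> 'a \<Rightarrow> bool) \<Rightarrow> 'b set \<Rightarrow> ('b \<Rightarrow> 'b \<Rightarrow> bool) \<Rightarrow> bool" where
  "tukey_eq P leP Q leQ \<longleftrightarrow> tukey_ge P leP Q leQ \<and> tukey_ge Q leQ P leP"

end

theory Submission
  imports Defs
begin

definition vsub :: "'a topology \<Rightarrow> 'a set set set" where
  "vsub X = {{C \<in> compacts X. C \<subseteq> U} | U. openin X U} \<union>
      {{C \<in> compacts X. C \<inter> U \<noteq> {}} | U. openin X U}"

lemma vietoris_eq: "vietoris X = topology_generated_by (vsub X)"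
  by (simp add: vietoris_def vsub_def)

lemma topspace_vietoris: "topspace (vietoris X) = compacts X"
proof -
  have "compacts X \<subseteq> \<Union>(vsub X)"
  proof
    fix C assume "C \<in> compacts X"
    moreover have "{C \<in> compacts X. C \<subseteq> topspace X} \<in> vsub X"
      unfolding vsub_def by blast
    moreover have "C \<subseteq> topspace X"
      using \<open>C \<in> compacts X\<close> compactin_subset_topspace by (auto simp: compacts_def)
    ultimately show "C \<in> \<Union>(vsub X)"
      by (metis (mono_tags, lifting) UnionI mem_Collect_eq)
  qed
  moreover have "\<Union>(vsub X) \<subseteq> compacts X" unfolding vsub_def by blast
  ultimately show ?thesis by (simp add: vietoris_eq)
qed

lemma openin_vietoris_sub: "openin X U \<Longrightarrow> openin (vietoris X) {C \<in> compacts X. C \<subseteq> U}"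
  unfolding vietoris_eq by (rule topology_generated_by_Basis) (auto simp: vsub_def)

lemma union_compact:
  assumes "compactin (vietoris X) K"
  shows "compactin X (\<Union>K)"
proof -
  have Ksub: "K \<subseteq> compacts X" using assms compactin_subset_topspace topspace_vietoris by metis
  have cov: "\<exists>G. finite G \<and> G \<subseteq> \<U> \<and> \<Union>K \<subseteq> \<Union>G"
    if U: "\<forall>u\<in>\<U>. openin X u" and cov: "\<Union>K \<subseteq> \<Union>\<U>" for \<U>
  proof -
    let ?I = "{F. finite F \<and> F \<subseteq> \<U>}"
    let ?f = "\<lambda>F. {C \<in> compacts X. C \<subseteq> \<Union>F}"
    have op: "\<forall>v\<in>?f ` ?I. openin (vietoris X) v"
      using U by (auto intro!: openin_vietoris_sub)
    have "K \<subseteq> \<Union>(?f ` ?I)"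
    proof
      fix k assume k: "k \<in> K"
      then have "compactin X k" using Ksub by (auto simp: compacts_def)
      moreover have "k \<subseteq> \<Union>\<U>" using k cov by blast
      ultimately obtain F where "finite F" "F \<subseteq> \<U>" "k \<subseteq> \<Union>F"
        using U unfolding compactin_def by meson
      then show "k \<in> \<Union>(?f ` ?I)" using k Ksub by blast
    qed
    then obtain V where V: "finite V" "V \<subseteq> ?f ` ?I" "K \<subseteq> \<Union>V"
      using assms op unfolding compactin_def by meson
    then obtain \<FF> where F: "\<FF> \<subseteq> ?I" "finite \<FF>" "V = ?f ` \<FF>"
      by (meson finite_subset_image)
    show ?thesis
    proof (intro exI conjI)
      show "finite (\<Union>\<FF>)" using F by auto
      show "\<Union>\<FF> \<subseteq> \<U>" using F by auto
      show "\<Union>K \<subseteq> \<Union>(\<Union>\<FF>)"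
      proof
        fix x assume "x \<in> \<Union>K"
        then obtain k where k: "k \<in> K" "x \<in> k" by blast
        then obtain F where "F \<in> \<FF>" "k \<subseteq> \<Union>F" using V F by auto
        then show "x \<in> \<Union>(\<Union>\<FF>)" using k by blast
      qed
    qed
  qed
  have T: "\<Union>K \<subseteq> topspace X"
    using Ksub compactin_subset_topspace unfolding compacts_def by blast
  show ?thesis unfolding compactin_def
  proof (intro conjI allI impI)
    show "\<Union>K \<subseteq> topspace X" by (rule T)
    fix \<U> assume "(\<forall>u\<in>\<U>. openin X u) \<and> \<Union>K \<subseteq> \<Union>\<U>"
    then show "\<exists>G. finite G \<and> G \<subseteq> \<U> \<and> \<Union>K \<subseteq> \<Union>G" using cov by presburger
  qed
qed

lemma Union_vsub: "\<Union>(vsub X) = compacts X"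
  using topspace_vietoris[of X] by (simp add: vietoris_eq)

lemma hyper_compact:
  assumes L: "compactin X L"
  shows "compactin (vietoris X) {C \<in> compacts X. C \<subseteq> L}"
proof -
  let ?L = "{C \<in> compacts X. C \<subseteq> L}"
  let ?S = "vsub X"
  define Y where "Y = topology (arbitrary union_of (finite intersection_of (\<lambda>x. x \<in> ?S) relative_to ?L))"
  have LT: "L \<subseteq> topspace X" using L compactin_subset_topspace by blast
  have fin: "\<exists>C'. finite C' \<and> C' \<subseteq> C \<and> ?L \<subseteq> \<Union>C'"
    if Csub: "C \<subseteq> ?S" and Ccov: "?L \<subseteq> \<Union>C" for C
  proof -
    define \<V> where "\<V> = {V. openin X V \<and> {D \<in> compacts X. D \<inter> V \<noteq> {}} \<in> C}"
    define W where "W = \<Union>\<V>"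
    have Wo: "openin X W" unfolding W_def \<V>_def by auto
    define F where "F = L \<inter> (topspace X - W)"
    have "closedin X (topspace X - W)" using Wo by auto
    then have Fc: "compactin X F" unfolding F_def using L compact_Int_closedin by blast
    have FL: "F \<in> ?L" using Fc unfolding F_def compacts_def by auto
    then obtain c where c: "c \<in> C" "F \<in> c" using Ccov by blast
    then have "c \<in> ?S" using Csub by blast
    then obtain U where U: "openin X U" "c = {D \<in> compacts X. D \<subseteq> U} \<or> c = {D \<in> compacts X. D \<inter> U \<noteq> {}}"
      unfolding vsub_def by blast
    have cU: "c = {D \<in> compacts X. D \<subseteq> U}"
    proof (rule ccontr)
      assume "c \<noteq> {D \<in> compacts X. D \<subseteq> U}"
      then have c2: "c = {D \<in> compacts X. D \<inter> U \<noteq> {}}" using U by blast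
      then have "U \<in> \<V>" using U c unfolding \<V>_def by blast
      then have "U \<subseteq> W" unfolding W_def by blast
      moreover have "F \<inter> U \<noteq> {}" using c c2 by blast
      ultimately show False unfolding F_def by blast
    qed
    then have FU: "F \<subseteq> U" using c by blast
    have "L \<subseteq> \<Union>(insert U \<V>)"
      using FU LT unfolding F_def W_def by blast
    moreover have "\<forall>u\<in>insert U \<V>. openin X u" using U unfolding \<V>_def by blast
    ultimately obtain G where G: "finite G" "G \<subseteq> insert U \<V>" "L \<subseteq> \<Union>G"
      using L unfolding compactin_def by meson
    let ?C' = "insert c ((\<lambda>V. {D \<in> compacts X. D \<inter> V \<noteq> {}}) ` (G \<inter> \<V>))"
    show ?thesis
    proof (intro exI conjI)
      show "finite ?C'" using G by auto
      show "?C' \<subseteq> C" using c unfolding \<V>_def by auto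
      show "?L \<subseteq> \<Union>?C'"
      proof
        fix D assume D: "D \<in> ?L"
        show "D \<in> \<Union>?C'"
        proof (cases "D \<subseteq> U")
          case True
          then show ?thesis using D cU by blast
        next
          case False
          then obtain x where x: "x \<in> D" "x \<notin> U" by blast
          then have "x \<in> L" using D by blast
          then obtain V where V: "V \<in> G" "x \<in> V" using G by blast
          then have "V \<noteq> U" using x by blast
          then have "V \<in> G \<inter> \<V>" using V G by blast
          moreover have "D \<in> {D \<in> compacts X. D \<inter> V \<noteq> {}}" using D x V by blast
          ultimately show ?thesis by blast
        qed
      qed
    qed
  qed
  have cY: "compact_space Y"
  proof (rule Alexander_subbase_alt[where \<B> = ?S and U = ?L])
    show "?L \<subseteq> \<Union>?S" using Union_vsub by blast
    show "\<And>C. C \<subseteq> ?S \<Longrightarrow> ?L \<subseteq> \<Union>C \<Longrightarrow> \<exists>C'. finite C' \<and> C' \<subseteq> C \<and> ?L \<subseteq> \<Union>C'"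
      using fin by blast
  qed (simp add: Y_def)
  have tY: "topspace Y = ?L" unfolding Y_def by simp
  have opY: "openin Y (?L \<inter> V)" if "generate_topology_on ?S V" for V
    using that
  proof induction
    case Empty
    then show ?case by simp
  next
    case (Int a b)
    have "?L \<inter> (a \<inter> b) = (?L \<inter> a) \<inter> (?L \<inter> b)" by blast
    moreover have "openin Y ((?L \<inter> a) \<inter> (?L \<inter> b))"
      by (intro openin_Int Int.IH)
    ultimately show ?case by simp
  next
    case (UN K)
    have "?L \<inter> \<Union>K = \<Union>((\<lambda>k. ?L \<inter> k) ` K)" by blast
    moreover have "openin Y (\<Union>((\<lambda>k. ?L \<inter> k) ` K))"
      by (intro openin_Union) (auto intro: UN.IH)
    ultimately show ?case by simp
  next
    case (Basis s)
    show ?case unfolding Y_def openin_subbase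
      by (intro arbitrary_union_of_inc relative_to_inc finite_intersection_of_inc) (use Basis in simp)
  qed
  show ?thesis unfolding compactin_def
  proof (intro conjI allI impI)
    show "?L \<subseteq> topspace (vietoris X)" by (auto simp: topspace_vietoris)
    fix \<U> assume H: "(\<forall>u\<in>\<U>. openin (vietoris X) u) \<and> ?L \<subseteq> \<Union>\<U>"
    have o: "\<forall>u\<in>(\<lambda>V. ?L \<inter> V) ` \<U>. openin Y u"
      using H opY unfolding vietoris_eq openin_topology_generated_by_iff by blast
    have "topspace Y \<subseteq> \<Union>((\<lambda>V. ?L \<inter> V) ` \<U>)" using H tY by blast
    then obtain G where G: "finite G" "G \<subseteq> (\<lambda>V. ?L \<inter> V) ` \<U>" "topspace Y \<subseteq> \<Union>G"
      using cY o unfolding compact_space_def compactin_def by meson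
    then obtain G' where G': "G' \<subseteq> \<U>" "finite G'" "G = (\<lambda>V. ?L \<inter> V) ` G'"
      by (meson finite_subset_image)
    have "?L \<subseteq> \<Union>G'"
    proof
      fix D assume "D \<in> ?L"
      then have "D \<in> \<Union>G" using G(3) tY by auto
      then obtain V where "V \<in> G'" "D \<in> ?L \<inter> V" using G'(3) by auto
      then show "D \<in> \<Union>G'" by blast
    qed
    then show "\<exists>F. finite F \<and> F \<subseteq> \<U> \<and> ?L \<subseteq> \<Union>F" using G'(1,2) by blast
  qed
qed

theorem mainTheorem5:
  fixes X :: "'a topology"
  assumes "tychonoff_space X"
  shows "tukey_eq (compacts X) (\<subseteq>) (compacts (vietoris X)) (\<subseteq>)"
  unfolding tukey_eq_def
proof
  show "tukey_ge (compacts X) (\<subseteq>) (compacts (vietoris X)) (\<subseteq>)"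
    unfolding tukey_ge_def
  proof (intro exI conjI allI impI)
    let ?phi = "\<lambda>K. {C \<in> compacts X. C \<subseteq> K}"
    show im: "?phi ` compacts X \<subseteq> compacts (vietoris X)"
      using hyper_compact by (auto simp: compacts_def)
    fix Cs assume Cs: "cofinal_in (\<subseteq>) Cs (compacts X)"
    show "cofinal_in (\<subseteq>) (?phi ` Cs) (compacts (vietoris X))"
      unfolding cofinal_in_def
    proof (intro conjI ballI)
      show "?phi ` Cs \<subseteq> compacts (vietoris X)" using im Cs unfolding cofinal_in_def by blast
      fix K assume K: "K \<in> compacts (vietoris X)"
      then have Kc: "compactin (vietoris X) K" by (simp add: compacts_def)
      then have "\<Union>K \<in> compacts X" using union_compact by (simp add: compacts_def)
      then obtain c where c: "c \<in> Cs" "\<Union>K \<subseteq> c" using Cs unfolding cofinal_in_def by blast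
      have "K \<subseteq> compacts X" using Kc compactin_subset_topspace topspace_vietoris by metis
      then have "K \<subseteq> ?phi c" using c by blast
      then show "\<exists>d\<in>?phi ` Cs. K \<subseteq> d" using c by blast
    qed
  qed
  show "tukey_ge (compacts (vietoris X)) (\<subseteq>) (compacts X) (\<subseteq>)"
    unfolding tukey_ge_def
  proof (intro exI conjI allI impI)
    show im: "Union ` compacts (vietoris X) \<subseteq> compacts X"
      using union_compact by (auto simp: compacts_def)
    fix Cs assume Cs: "cofinal_in (\<subseteq>) Cs (compacts (vietoris X))"
    show "cofinal_in (\<subseteq>) (Union ` Cs) (compacts X)"
      unfolding cofinal_in_def
    proof (intro conjI ballI)
      show "Union ` Cs \<subseteq> compacts X" using im Cs unfolding cofinal_in_def by blast
      fix K assume K: "K \<in> compacts X"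
      then have "{K} \<in> compacts (vietoris X)"
        by (simp add: compacts_def topspace_vietoris)
      then obtain c where c: "c \<in> Cs" "{K} \<subseteq> c" using Cs unfolding cofinal_in_def by blast
      then show "\<exists>d\<in>Union ` Cs. K \<subseteq> d" by blast
    qed
  qed
qed

end
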